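(* For every homeomorphism $h$ of the Kirch space $(\mathbb{N},\tau_K)$ and every odd prime $p$, we have $\tilde h(\mathcal{F}_{\{p,2p\}})=\mathcal{F}_{\{p,2p\}}$, where $\tilde h(\mathcal{F})=\{h[A]:A\in\mathcal{F}\}$.
   Context: $\mathbb{N}=\{1,2,\dots\}$, $\mathbb{N}_0=\{0\}\cup\mathbb{N}$. The Kirch topology $\tau_K$ on $\mathbb{N}$ is generated by the base of all $a+b\mathbb{N}_0=\{a+bn:n\in\mathbb{N}_0\}$ with $a,b\in\mathbb{N}$ coprime and $b$ square-free. Closures $\overline{U}$ are in $\tau_K$; $\tau_x=\{U\in\tau_K:x\in U\}$. For finite $E\subseteq\mathbb{N}$, $\mathcal{F}_E=\{B\subseteq\mathbb{N}:\exists (U_x)_{x\in E}\in\prod_{x\in E}\tau_x\ (\bigcap_{x\in E}\overline{U_x}\subseteq B)\}$. $h[A]=\{h(a):a\in A\}$. *)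

theory Defs
  imports "HOL-Analysis.Analysis" "HOL-Computational_Algebra.Squarefree"
begin

definition Npos :: "nat set" where
  "Npos = {1..}"

definition kirch_basic :: "nat \<Rightarrow> nat \<Rightarrow> nat set" where
  "kirch_basic a b = {a + b * n | n. True}"

definition kirch_base :: "nat set set" where
  "kirch_base = {kirch_basic a b | a b. a \<ge> 1 \<and> b \<ge> 1 \<and> coprime a b \<and> squarefree b}"

definition kirch_open :: "nat set \<Rightarrow> bool" where
  "kirch_open U \<longleftrightarrow> U \<subseteq> Npos \<and> (\<forall>x\<in>U. \<exists>B\<in>kirch_base. x \<in> B \<and> B \<subseteq> U)"

definition kirch_topology :: "nat topology" where
  "kirch_topology = topology kirch_open"

definition kirch_nbhds :: "nat \<Rightarrow> nat set set" where
  "kirch_nbhds x = {U. openin kirch_topology U \<and> x \<in> U}"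

definition kirch_F :: "nat set \<Rightarrow> nat set set" where
  "kirch_F E = {B. B \<subseteq> Npos \<and> (\<exists>U. (\<forall>x\<in>E. U x \<in> kirch_nbhds x) \<and>
      (\<Inter>x\<in>E. kirch_topology closure_of (U x)) \<subseteq> B)}"

end

theory Submission
  imports Defs
begin

lemma kb_mem: "y \<in> kirch_basic a b \<longleftrightarrow> (\<exists>n. y = a + b * n)"
  by (auto simp: kirch_basic_def)

lemma kb_sub: "y \<in> kirch_basic a b \<Longrightarrow> kirch_basic y b \<subseteq> kirch_basic a b"
proof
  fix z assume "y \<in> kirch_basic a b" "z \<in> kirch_basic y b"
  then obtain n m where "y = a + b * n" "z = y + b * m" by (auto simp: kb_mem)
  then have "z = a + b * (n + m)" by (simp add: algebra_simps)
  then show "z \<in> kirch_basic a b" by (auto simp: kb_mem)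
qed

lemma coprime_shift: "coprime (a + b * n) b \<longleftrightarrow> coprime a (b::nat)"
proof -
  have "gcd (a + b * n) b = gcd b (n * b + a)" by (simp add: gcd.commute ac_simps)
  also have "\<dots> = gcd b a" by (rule gcd_add_mult)
  finally show ?thesis by (simp add: coprime_iff_gcd_eq_1 gcd.commute)
qed

lemma kb_coprime: "y \<in> kirch_basic a b \<Longrightarrow> coprime a b \<Longrightarrow> coprime y b"
  unfolding kb_mem using coprime_shift by auto

lemma kb_dvd: "b dvd m \<Longrightarrow> kirch_basic x m \<subseteq> kirch_basic x b"
proof
  fix y assume "b dvd m" "y \<in> kirch_basic x m"
  then obtain k n where "m = b * k" "y = x + m * n" unfolding kb_mem by (auto elim!: dvdE)
  then have "y = x + b * (k * n)" by simp
  then show "y \<in> kirch_basic x b" by (auto simp: kb_mem)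
qed

lemma kb_self: "x \<in> kirch_basic x b"
  unfolding kb_mem by (rule exI[of _ 0]) simp

lemma sqf_lcm:
  fixes b c :: nat
  assumes "squarefree b" "squarefree c"
  shows "squarefree (lcm b c)"
proof -
  have b0: "b \<noteq> 0" using assms(1) by (metis not_squarefree_0)
  have c0: "c \<noteq> 0" using assms(2) by (metis not_squarefree_0)
  have l0: "lcm b c \<noteq> 0" using b0 c0 by simp
  show ?thesis
    unfolding squarefree_factorial_semiring''[OF l0]
    using assms b0 c0 by (auto simp: multiplicity_lcm squarefree_factorial_semiring'' gr0I)
qed

lemma basic_in_base: "a \<ge> 1 \<Longrightarrow> b \<ge> 1 \<Longrightarrow> coprime a b \<Longrightarrow> squarefree b \<Longrightarrow> kirch_basic a b \<in> kirch_base"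
  unfolding kirch_base_def by blast

lemma kirch_istop: "istopology kirch_open"
  unfolding istopology_def
proof (intro conjI allI impI)
  fix S T assume S: "kirch_open S" and T: "kirch_open T"
  show "kirch_open (S \<inter> T)"
    unfolding kirch_open_def
  proof (intro conjI ballI)
    show "S \<inter> T \<subseteq> Npos" using S unfolding kirch_open_def by auto
    fix x assume x: "x \<in> S \<inter> T"
    obtain B1 where B1: "B1 \<in> kirch_base" "x \<in> B1" "B1 \<subseteq> S" using S x unfolding kirch_open_def by blast
    obtain B2 where B2: "B2 \<in> kirch_base" "x \<in> B2" "B2 \<subseteq> T" using T x unfolding kirch_open_def by blast
    obtain a b where ab: "B1 = kirch_basic a b" "a \<ge> 1" "b \<ge> 1" "coprime a b" "squarefree b"
      using B1 unfolding kirch_base_def by blast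
    obtain c d where cd: "B2 = kirch_basic c d" "c \<ge> 1" "d \<ge> 1" "coprime c d" "squarefree d"
      using B2 unfolding kirch_base_def by blast
    have cxb: "coprime x b" using kb_coprime ab B1 by blast
    have cxd: "coprime x d" using kb_coprime cd B2 by blast
    have x1: "x \<ge> 1" using B1(2) ab(1,2) by (auto simp: kb_mem)
    let ?m = "lcm b d"
    have "coprime x (b*d)" using cxb cxd by simp
    moreover have "lcm b d dvd b * d" by (simp add: lcm_least)
    ultimately have cxm: "coprime x ?m" using coprime_divisors[of x x "lcm b d" "b*d"] by simp
    have "kirch_basic x ?m \<in> kirch_base"
      using x1 ab cd cxm sqf_lcm[of b d]
      by (intro basic_in_base) (auto simp: lcm_pos_nat Suc_le_eq)
    moreover have "kirch_basic x ?m \<subseteq> kirch_basic x b"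
      using kb_dvd[OF dvd_lcm1[of b d]] .
    moreover have "kirch_basic x ?m \<subseteq> kirch_basic x d"
      using kb_dvd[OF dvd_lcm2[of d b]] by simp
    moreover have "kirch_basic x b \<subseteq> S" using kb_sub[of x a b] ab(1) B1 by blast
    moreover have "kirch_basic x d \<subseteq> T" using kb_sub[of x c d] cd(1) B2 by blast
    ultimately show "\<exists>B\<in>kirch_base. x \<in> B \<and> B \<subseteq> S \<inter> T"
      using kb_self[of x ?m] by (intro bexI[of _ "kirch_basic x ?m"]) auto
  qed
next
  fix K assume K: "\<forall>S\<in>K. kirch_open S"
  show "kirch_open (\<Union>K)" unfolding kirch_open_def
  proof (intro conjI ballI)
    show "\<Union>K \<subseteq> Npos" using K unfolding kirch_open_def by auto
    fix x assume "x \<in> \<Union>K"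
    then obtain S where S: "S \<in> K" "x \<in> S" by auto
    then obtain B where "B \<in> kirch_base" "x \<in> B" "B \<subseteq> S" using K unfolding kirch_open_def by meson
    then show "\<exists>B\<in>kirch_base. x \<in> B \<and> B \<subseteq> \<Union>K" using S by auto
  qed
qed

lemma openin_kirch: "openin kirch_topology = kirch_open"
  unfolding kirch_topology_def using kirch_istop by (simp add: topology_inverse')


lemma base_open: "B \<in> kirch_base \<Longrightarrow> kirch_open B"
proof -
  assume B: "B \<in> kirch_base"
  then obtain a b where ab: "B = kirch_basic a b" "a \<ge> 1" "b \<ge> 1" "coprime a b" "squarefree b"
    unfolding kirch_base_def by blast
  show ?thesis unfolding kirch_open_def
  proof (intro conjI ballI)
    show "B \<subseteq> Npos" using ab(1,2) by (auto simp: kb_mem Npos_def)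
    fix y assume y: "y \<in> B"
    have "y \<ge> 1" using y ab(1,2) by (auto simp: kb_mem)
    moreover have "coprime y b" using kb_coprime[of y a b] y ab(1,4) by simp
    ultimately have "kirch_basic y b \<in> kirch_base" using basic_in_base ab(3,5) by simp
    moreover have "kirch_basic y b \<subseteq> B" using kb_sub[of y a b] y ab(1) by simp
    ultimately show "\<exists>B'\<in>kirch_base. y \<in> B' \<and> B' \<subseteq> B" using kb_self[of y b] by (intro bexI) auto
  qed
qed

lemma basic_open: "a \<ge> 1 \<Longrightarrow> b \<ge> 1 \<Longrightarrow> coprime a b \<Longrightarrow> squarefree b \<Longrightarrow> openin kirch_topology (kirch_basic a b)"
  by (simp add: openin_kirch base_open basic_in_base)

lemma topspace_kirch: "topspace kirch_topology = Npos"
proof -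
  have "Npos \<subseteq> topspace kirch_topology"
  proof
    fix x assume "x \<in> Npos"
    then have "x \<ge> 1" by (simp add: Npos_def)
    then have "openin kirch_topology (kirch_basic x 1)" by (intro basic_open) auto
    then show "x \<in> topspace kirch_topology" using kb_self openin_subset by blast
  qed
  moreover have "topspace kirch_topology \<subseteq> Npos"
    unfolding topspace_def openin_kirch kirch_open_def by blast
  ultimately show ?thesis by blast
qed


lemma sqf_dvd:
  fixes g d :: nat
  assumes "squarefree g" "\<And>q. prime q \<Longrightarrow> q dvd g \<Longrightarrow> q dvd d"
  shows "g dvd d"
proof (cases "d = 0")
  case True then show ?thesis by simp
next
  case False
  have g0: "g \<noteq> 0" using assms(1) by (metis not_squarefree_0)
  show ?thesis
  proof (rule multiplicity_le_imp_dvd[OF g0])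
    fix q :: nat assume q: "prime q"
    have m1: "multiplicity q g \<le> 1" using assms(1) g0 q squarefree_factorial_semiring'' by blast
    show "multiplicity q g \<le> multiplicity q d"
    proof (cases "q dvd g")
      case True
      then have "q dvd d" using assms(2) q by blast
      then have "multiplicity q d > 0" using prime_multiplicity_gt_zero_iff[of q d] q False by simp
      then show ?thesis using m1 by linarith
    next
      case False
      then have "multiplicity q g = 0" by (rule not_dvd_imp_multiplicity_0)
      then show ?thesis by simp
    qed
  qed
qed

lemma common_elem:
  fixes x z b c :: nat
  assumes b: "b \<ge> 1" and c: "c \<ge> 1" and sb: "squarefree b"
    and cong: "\<And>q. prime q \<Longrightarrow> q dvd b \<Longrightarrow> q dvd c \<Longrightarrow> x mod q = z mod q"
  shows "\<exists>n m. x + b * n = z + c * m"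
proof -
  let ?g = "gcd b c"
  have sg: "squarefree ?g" using squarefree_mono[OF gcd_dvd1 sb] .
  show ?thesis
  proof (cases "x \<le> z")
    case True
    have "?g dvd (z - x)"
    proof (rule sqf_dvd[OF sg])
      fix q :: nat assume "prime q" "q dvd ?g"
      then have "x mod q = z mod q" using cong by auto
      then have "z mod q = x mod q" by simp
      then show "q dvd (z - x)" using mod_eq_dvd_iff_nat[OF True] by blast
    qed
    then obtain k where k: "z - x = ?g * k" by (auto elim!: dvdE)
    obtain s t where st: "b * s = c * t + ?g" using bezout_nat[of b c] b by auto
    have "x + b * (s * k) = x + (c * t + ?g) * k" using st by (simp add: mult.assoc[symmetric])
    also have "\<dots> = z + c * (t * k)" using k True by (simp add: algebra_simps)
    finally show ?thesis by blast
  next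
    case False
    then have le: "z \<le> x" by simp
    have "?g dvd (x - z)"
    proof (rule sqf_dvd[OF sg])
      fix q :: nat assume "prime q" "q dvd ?g"
      then have "x mod q = z mod q" using cong by auto
      then show "q dvd (x - z)" using mod_eq_dvd_iff_nat[OF le] by blast
    qed
    then obtain k where k: "x - z = ?g * k" by (auto elim!: dvdE)
    obtain s t where st: "c * s = b * t + gcd c b" using bezout_nat[of c b] c by auto
    have "z + c * (s * k) = z + (b * t + ?g) * k" using st by (simp add: mult.assoc[symmetric] gcd.commute)
    also have "\<dots> = x + b * (t * k)" using k le by (simp add: algebra_simps)
    finally show ?thesis by metis
  qed
qed

lemma open_basic_around:
  assumes "openin kirch_topology T" "z \<in> T"
  shows "\<exists>c. c \<ge> 1 \<and> squarefree c \<and> coprime z c \<and> kirch_basic z c \<subseteq> T"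
proof -
  obtain B where B: "B \<in> kirch_base" "z \<in> B" "B \<subseteq> T"
    using assms unfolding openin_kirch kirch_open_def by blast
  obtain a c where ac: "B = kirch_basic a c" "a \<ge> 1" "c \<ge> 1" "coprime a c" "squarefree c"
    using B(1) unfolding kirch_base_def by blast
  have "coprime z c" using kb_coprime B(2) ac by blast
  moreover have "kirch_basic z c \<subseteq> T" using kb_sub[of z a c] B ac(1) by blast
  ultimately show ?thesis using ac by blast
qed

lemma in_closure_basic:
  fixes x b z :: nat
  assumes "x \<ge> 1" "b \<ge> 1" "squarefree b" "z \<ge> 1"
    and cond: "\<And>q. prime q \<Longrightarrow> q dvd b \<Longrightarrow> q dvd z \<or> z mod q = x mod q"
  shows "z \<in> kirch_topology closure_of kirch_basic x b"
  unfolding in_closure_of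
proof (intro conjI allI impI)
  show "z \<in> topspace kirch_topology" using assms(4) by (simp add: topspace_kirch Npos_def)
  fix T assume T: "z \<in> T \<and> openin kirch_topology T"
  then obtain c where c: "c \<ge> 1" "squarefree c" "coprime z c" "kirch_basic z c \<subseteq> T"
    using open_basic_around by blast
  have "\<exists>n m. x + b * n = z + c * m"
  proof (rule common_elem[OF assms(2) c(1) assms(3)])
    fix q :: nat assume q: "prime q" "q dvd b" "q dvd c"
    have "\<not> q dvd z"
    proof
      assume "q dvd z"
      then have "is_unit q" using c(3) q(3) coprime_common_divisor by blast
      then show False using q(1) by simp
    qed
    then have "z mod q = x mod q" using cond q by blast
    then show "x mod q = z mod q" by simp
  qed
  then obtain n m where nm: "x + b * n = z + c * m" by blast
  have "z + c * m \<in> kirch_basic z c" unfolding kb_mem by blast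
  then have "x + b * n \<in> T" using nm c(4) by auto
  moreover have "x + b * n \<in> kirch_basic x b" unfolding kb_mem by blast
  ultimately show "\<exists>y. y \<in> kirch_basic x b \<and> y \<in> T" by blast
qed

lemma closure_basic_cond:
  fixes x m z q :: nat
  assumes z: "z \<in> kirch_topology closure_of kirch_basic x m" and q: "prime q" "q dvd m"
  shows "q dvd z \<or> z mod q = x mod q"
proof (rule ccontr)
  assume nc: "\<not> (q dvd z \<or> z mod q = x mod q)"
  have z1: "z \<ge> 1" using subsetD[OF closure_of_subset_topspace z] topspace_kirch by (simp add: Npos_def)
  have "coprime q z" using prime_imp_coprime[OF q(1)] nc by blast
  then have "coprime z q" by (simp add: coprime_commute)
  moreover have "q \<ge> 1" using q(1) prime_gt_0_nat by (simp add: Suc_le_eq)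
  ultimately have "openin kirch_topology (kirch_basic z q)"
    using z1 squarefree_prime[OF q(1)] by (intro basic_open) auto
  then obtain y where y: "y \<in> kirch_basic x m" "y \<in> kirch_basic z q"
    using z kb_self[of z q] unfolding in_closure_of by blast
  obtain n where nj1: "y = x + m * n" using y(1) unfolding kb_mem by blast
  obtain j where nj2: "y = z + q * j" using y(2) unfolding kb_mem by blast
  note nj = nj1 nj2
  obtain k where k: "m = q * k" using q(2) by (auto elim!: dvdE)
  have "y = x + q * (k * n)" using nj(1) k by (simp add: mult.assoc)
  then have "y mod q = x mod q" by simp
  moreover have "y mod q = z mod q" using nj(2) by simp
  ultimately have "x mod q = z mod q" by simp
  then show False using nc by simp
qed

definition rr :: "nat set \<Rightarrow> nat \<Rightarrow> nat set" where
  "rr E q = {r. r < q \<and> (\<forall>x\<in>E. \<not> q dvd x \<longrightarrow> r = 0 \<or> r = x mod q)}"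

definition cyl :: "(nat \<Rightarrow> nat set) \<Rightarrow> nat set \<Rightarrow> nat set" where
  "cyl R S = {z. 1 \<le> z \<and> (\<forall>q\<in>S. z mod q \<in> R q)}"

definition Filt :: "(nat \<Rightarrow> nat set) \<Rightarrow> nat set set" where
  "Filt R = {B. B \<subseteq> Npos \<and> (\<exists>S. finite S \<and> (\<forall>q\<in>S. prime q) \<and> cyl R S \<subseteq> B)}"

lemma nbhd_basic:
  assumes "U \<in> kirch_nbhds x"
  shows "\<exists>b. b \<ge> 1 \<and> squarefree b \<and> coprime x b \<and> kirch_basic x b \<subseteq> U"
  using assms open_basic_around unfolding kirch_nbhds_def by blast

lemma kF_sub_Filt:
  assumes fin: "finite E" and EN: "E \<subseteq> Npos"
  shows "kirch_F E \<subseteq> Filt (rr E)"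
proof
  fix B assume "B \<in> kirch_F E"
  then obtain U where BN: "B \<subseteq> Npos" and U: "\<forall>x\<in>E. U x \<in> kirch_nbhds x"
    and UB: "(\<Inter>x\<in>E. kirch_topology closure_of (U x)) \<subseteq> B"
    unfolding kirch_F_def by blast
  have "\<forall>x\<in>E. \<exists>b. b \<ge> 1 \<and> squarefree b \<and> coprime x b \<and> kirch_basic x b \<subseteq> U x"
    using U nbhd_basic by blast
  then obtain bf where bf: "\<And>x. x \<in> E \<Longrightarrow> bf x \<ge> 1 \<and> squarefree (bf x) \<and> coprime x (bf x) \<and> kirch_basic x (bf x) \<subseteq> U x"
    by metis
  define P where "P = (\<Prod>x\<in>E. bf x)"
  have P0: "P > 0" unfolding P_def using bf by (simp add: Suc_le_eq prod_pos)
  define S where "S = {q. prime q \<and> q dvd P}"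
  have "S \<subseteq> {..P}"
  proof
    fix q assume "q \<in> S"
    then have "q dvd P" unfolding S_def by simp
    then have "q \<le> P" using P0 by (rule dvd_imp_le)
    then show "q \<in> {..P}" by simp
  qed
  then have finS: "finite S" using finite_subset by blast
  have "cyl (rr E) S \<subseteq> B"
  proof
    fix z assume z: "z \<in> cyl (rr E) S"
    have "z \<in> (\<Inter>x\<in>E. kirch_topology closure_of (U x))"
    proof
      fix x assume x: "x \<in> E"
      have x1: "x \<ge> 1" using x EN by (auto simp: Npos_def)
      have "z \<in> kirch_topology closure_of kirch_basic x (bf x)"
      proof (rule in_closure_basic)
        show "x \<ge> 1" by fact
        show "bf x \<ge> 1" "squarefree (bf x)" using bf x by auto
        show "z \<ge> 1" using z by (simp add: cyl_def)
        fix q :: nat assume q: "prime q" "q dvd bf x"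
        have "q dvd P" unfolding P_def using q(2) x fin by (meson dvd_prodI dvd_trans)
        then have "q \<in> S" using q(1) by (simp add: S_def)
        then have "z mod q \<in> rr E q" using z by (simp add: cyl_def)
        moreover have "\<not> q dvd x"
        proof
          assume "q dvd x"
          then have "is_unit q" using bf[OF x] q(2) coprime_common_divisor by blast
          then show False using q(1) by simp
        qed
        ultimately have "z mod q = 0 \<or> z mod q = x mod q" using x by (simp add: rr_def)
        then show "q dvd z \<or> z mod q = x mod q" by auto
      qed
      then show "z \<in> kirch_topology closure_of (U x)"
        using closure_of_mono bf[OF x] by blast
    qed
    then show "z \<in> B" using UB by blast
  qed
  then show "B \<in> Filt (rr E)" unfolding Filt_def using BN finS S_def by blast
qed

lemma Filt_sub_kF:
  assumes fin: "finite E" and EN: "E \<subseteq> Npos" and ne: "E \<noteq> {}"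
  shows "Filt (rr E) \<subseteq> kirch_F E"
proof
  fix B assume "B \<in> Filt (rr E)"
  then obtain S where BN: "B \<subseteq> Npos" and finS: "finite S" and pS: "\<forall>q\<in>S. prime q"
    and SB: "cyl (rr E) S \<subseteq> B" unfolding Filt_def by blast
  define m where "m x = (\<Prod>q\<in>{q\<in>S. \<not> q dvd x}. q)" for x
  have m_props: "m x \<ge> 1 \<and> squarefree (m x) \<and> coprime x (m x)" for x
  proof -
    have "m x > 0" unfolding m_def using pS finS by (intro prod_pos) (auto simp: prime_gt_0_nat)
    moreover have "squarefree (m x)" unfolding m_def
      by (rule squarefree_prod_coprime) (auto simp: pS primes_coprime squarefree_prime)
    moreover have "coprime x (m x)" unfolding m_def
      by (rule prod_coprime_right) (auto simp: pS prime_imp_coprime coprime_commute)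
    ultimately show ?thesis by (simp add: Suc_le_eq)
  qed
  define U where "U x = kirch_basic x (m x)" for x
  have U: "\<forall>x\<in>E. U x \<in> kirch_nbhds x"
  proof
    fix x assume x: "x \<in> E"
    then have "x \<ge> 1" using EN by (auto simp: Npos_def)
    then show "U x \<in> kirch_nbhds x" unfolding kirch_nbhds_def U_def
      using m_props[of x] kb_self[of x "m x"] by (auto intro!: basic_open)
  qed
  have "(\<Inter>x\<in>E. kirch_topology closure_of (U x)) \<subseteq> cyl (rr E) S"
  proof
    fix z assume z: "z \<in> (\<Inter>x\<in>E. kirch_topology closure_of (U x))"
    obtain x0 where x0: "x0 \<in> E" using ne by blast
    have "z \<in> kirch_topology closure_of (U x0)" using z x0 by blast
    then have "z \<in> topspace kirch_topology" using closure_of_subset_topspace[of kirch_topology "U x0"] by (rule subsetD[rotated])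
    then have z1: "z \<ge> 1" by (simp add: topspace_kirch Npos_def)
    have "z mod q \<in> rr E q" if q: "q \<in> S" for q
    proof -
      have "q > 0" using pS q prime_gt_0_nat by blast
      moreover have "z mod q = 0 \<or> z mod q = x mod q" if x: "x \<in> E" "\<not> q dvd x" for x
      proof -
        have "q dvd m x" unfolding m_def using q x(2) finS by (intro dvd_prodI) auto
        moreover have "z \<in> kirch_topology closure_of kirch_basic x (m x)" using z x(1) U_def by blast
        ultimately have "q dvd z \<or> z mod q = x mod q" using closure_basic_cond pS q by blast
        then show ?thesis by auto
      qed
      ultimately show ?thesis unfolding rr_def by auto
    qed
    then show "z \<in> cyl (rr E) S" using z1 by (simp add: cyl_def)
  qed
  then show "B \<in> kirch_F E" unfolding kirch_F_def using BN U SB by blast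
qed

lemma kF_eq:
  assumes "finite E" "E \<subseteq> Npos" "E \<noteq> {}"
  shows "kirch_F E = Filt (rr E)"
  using kF_sub_Filt Filt_sub_kF assms by blast

definition valid :: "nat set \<Rightarrow> bool" where
  "valid E \<longleftrightarrow> finite E \<and> E \<subseteq> Npos \<and> E \<noteq> {}"

lemma rr_zero: "prime q \<Longrightarrow> 0 \<in> rr E q"
  unfolding rr_def using prime_gt_0_nat by auto

lemma rr_lt: "r \<in> rr E q \<Longrightarrow> r < q"
  unfolding rr_def by auto

lemma rr_two: "rr E 2 = {0, 1}"
  unfolding rr_def by (auto simp: odd_iff_mod_2_eq_one)

lemma cyl_mono: "(\<And>q. q \<in> S \<Longrightarrow> R q \<subseteq> R' q) \<Longrightarrow> cyl R S \<subseteq> cyl R' S"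
  unfolding cyl_def by blast

lemma mod_lem: "(r::nat) < q \<Longrightarrow> (r + q * k) mod q = r"
  by (simp only: mod_mult_self2) simp

lemma Filt_anti: "(\<And>q. prime q \<Longrightarrow> R q \<subseteq> R' q) \<Longrightarrow> Filt R' \<subseteq> Filt R"
proof
  fix B assume le: "\<And>q. prime q \<Longrightarrow> R q \<subseteq> R' q" and "B \<in> Filt R'"
  then obtain S where S: "B \<subseteq> Npos" "finite S" "\<forall>q\<in>S. prime q" "cyl R' S \<subseteq> B"
    unfolding Filt_def by blast
  have "cyl R S \<subseteq> cyl R' S" using le S(3) by (intro cyl_mono) auto
  then show "B \<in> Filt R" using S unfolding Filt_def by blast
qed

lemma Filt_le:
  assumes sub: "Filt R' \<subseteq> Filt R" and q: "prime q" and z0: "\<And>l. prime l \<Longrightarrow> 0 \<in> R l"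
    and r: "r \<in> R q" "r < q"
  shows "r \<in> R' q"
proof -
  have "cyl R' {q} \<in> Filt R'" unfolding Filt_def using q by (auto simp: cyl_def Npos_def)
  then have "cyl R' {q} \<in> Filt R" using sub by blast
  then obtain S where S: "finite S" "\<forall>l\<in>S. prime l" "cyl R S \<subseteq> cyl R' {q}"
    unfolding Filt_def by blast
  define M where "M = (\<Prod>l\<in>S - {q}. l)"
  have M0: "M \<noteq> 0" unfolding M_def using S(1,2) by (auto simp: prime_gt_0_nat)
  have cMq: "coprime M q" unfolding M_def
    by (rule prod_coprime_left) (use S(2) q in \<open>auto simp: primes_coprime\<close>)
  obtain s t where st: "M * s = q * t + gcd M q" using bezout_nat[OF M0] by blast
  then have st': "M * s = q * t + 1" using cMq by simp
  define z where "z = M * s * (r + q)"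
  have zq: "z mod q = r"
  proof -
    have "z = (q * t + 1) * (r + q)" unfolding z_def using st' by simp
    also have "\<dots> = r + q * (t * r + t * q + 1)" by (simp add: algebra_simps)
    finally have zz: "z = r + q * (t * r + t * q + 1)" .
    show ?thesis unfolding zz by (rule mod_lem[OF r(2)])
  qed
  have z1: "z \<ge> 1" unfolding z_def using st' q by (simp add: Suc_le_eq prime_gt_0_nat)
  have "z \<in> cyl R S" unfolding cyl_def
  proof (intro CollectI conjI ballI)
    show "1 \<le> z" by fact
    fix l assume l: "l \<in> S"
    show "z mod l \<in> R l"
    proof (cases "l = q")
      case True then show ?thesis using zq r(1) by simp
    next
      case False
      then have "l dvd M" unfolding M_def using l S(1) by (intro dvd_prodI) auto
      then have "l dvd z" unfolding z_def by simp
      then show ?thesis using z0 S(2) l by simp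
    qed
  qed
  then have "z mod q \<in> R' q" using S(3) by (auto simp: cyl_def)
  then show ?thesis using zq by simp
qed

lemma kF_le:
  assumes "valid E" "valid E'" "kirch_F E \<subseteq> kirch_F E'" "prime q"
  shows "rr E' q \<subseteq> rr E q"
proof
  fix r assume r: "r \<in> rr E' q"
  have e1: "kirch_F E = Filt (rr E)" using assms(1) kF_eq unfolding valid_def by blast
  have e2: "kirch_F E' = Filt (rr E')" using assms(2) kF_eq unfolding valid_def by blast
  have "Filt (rr E) \<subseteq> Filt (rr E')" using assms(3) e1 e2 by simp
  then show "r \<in> rr E q" using Filt_le[of "rr E" "rr E'" q r, OF _ assms(4) rr_zero r rr_lt[OF r]] by blast
qed

lemma kF_leI:
  assumes "valid E" "valid E'" "\<And>q. prime q \<Longrightarrow> odd q \<Longrightarrow> rr E' q \<subseteq> rr E q"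
  shows "kirch_F E \<subseteq> kirch_F E'"
proof -
  have "\<And>q. prime q \<Longrightarrow> rr E' q \<subseteq> rr E q"
  proof -
    fix q :: nat assume q: "prime q"
    show "rr E' q \<subseteq> rr E q"
    proof (cases "q = 2")
      case True then show ?thesis by (simp add: rr_two)
    next
      case False
      then have "q > 2" using prime_ge_2_nat[OF q] by simp
      then have "odd q" using prime_odd_nat[OF q] by simp
      then show ?thesis using assms(3)[OF q] by simp
    qed
  qed
  then have "Filt (rr E) \<subseteq> Filt (rr E')" using Filt_anti[of "rr E'" "rr E"] by blast
  moreover have "kirch_F E = Filt (rr E)" using assms(1) kF_eq unfolding valid_def by blast
  moreover have "kirch_F E' = Filt (rr E')" using assms(2) kF_eq unfolding valid_def by blast
  ultimately show ?thesis by simp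
qed

lemma kF_eqI:
  assumes "valid E" "valid E'" "\<And>q. prime q \<Longrightarrow> odd q \<Longrightarrow> rr E' q = rr E q"
  shows "kirch_F E = kirch_F E'"
proof
  show "kirch_F E \<subseteq> kirch_F E'" using kF_leI[OF assms(1,2)] assms(3) by simp
  show "kirch_F E' \<subseteq> kirch_F E" using kF_leI[OF assms(2,1)] assms(3) by simp
qed

lemma rr_shape: "x \<in> E \<Longrightarrow> \<not> q dvd x \<Longrightarrow> rr E q \<subseteq> {0, x mod q}"
  unfolding rr_def by auto

lemma rr_full: "(\<And>x. x \<in> E \<Longrightarrow> q dvd x) \<Longrightarrow> rr E q = {..<q}"
  unfolding rr_def by auto

lemma valid3: "x \<ge> 1 \<Longrightarrow> valid {x, x + d, x + 2 * d}"
  unfolding valid_def Npos_def by auto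

lemma valid2: "p \<ge> 1 \<Longrightarrow> valid {p, 2 * p}"
  unfolding valid_def Npos_def by auto

lemma odd_prime_dvd2:
  assumes "prime (l::nat)" "odd l" "l dvd 2 * d" shows "l dvd d"
proof -
  have "l dvd 2 \<or> l dvd d" using assms(1,3) prime_dvd_mult_iff by blast
  moreover have "\<not> l dvd 2"
  proof
    assume "l dvd 2"
    then have "l \<le> 2" by (rule dvd_imp_le) simp
    then have "l = 2" using prime_ge_2_nat[OF assms(1)] by simp
    then show False using assms(2) by simp
  qed
  ultimately show ?thesis by blast
qed

lemma modeq_dvd: "(a + k) mod l = a mod (l::nat) \<Longrightarrow> l dvd k"
  using mod_eq_dvd_iff_nat[of a "a + k" l] by simp

lemma dvd_add_cancel: "(l::nat) dvd a \<Longrightarrow> l dvd a + k \<Longrightarrow> l dvd k"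
  by (simp add: dvd_add_right_iff)

lemma rr3_nd:
  fixes x d l :: nat
  assumes l: "prime l" "odd l" and nd: "\<not> l dvd d"
  shows "rr {x, x + d, x + 2 * d} l = {0}"
proof -
  have nd2: "\<not> l dvd 2 * d" using nd odd_prime_dvd2[OF l] by blast
  have x2: "x + 2 * d = (x + d) + d" by simp
  have "r = 0" if r: "r \<in> rr {x, x + d, x + 2 * d} l" for r
  proof (rule ccontr)
    assume r0: "r \<noteq> 0"
    have h1: "\<not> l dvd x \<Longrightarrow> r = x mod l" using r r0 by (auto simp: rr_def)
    have h2: "\<not> l dvd (x + d) \<Longrightarrow> r = (x + d) mod l" using r r0 by (auto simp: rr_def)
    have h3: "\<not> l dvd (x + 2 * d) \<Longrightarrow> r = (x + 2 * d) mod l" using r r0 by (auto simp: rr_def)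
    show False
    proof (cases "l dvd x")
      case True
      have n2: "\<not> l dvd (x + d)" using dvd_add_cancel[OF True] nd by blast
      have n3: "\<not> l dvd (x + 2 * d)" using dvd_add_cancel[OF True] nd2 by blast
      have "(x + d + d) mod l = (x + d) mod l" using h2[OF n2] h3[OF n3] x2 by simp
      then show False using modeq_dvd nd by blast
    next
      case nx: False
      show False
      proof (cases "l dvd (x + d)")
        case True
        have "\<not> l dvd (x + d + d)" using dvd_add_cancel[OF True, of d] nd by blast
        then have n3: "\<not> l dvd (x + 2 * d)" unfolding x2 .
        have "(x + 2 * d) mod l = x mod l" using h1[OF nx] h3[OF n3] by simp
        then show False using modeq_dvd nd2 by blast
      next
        case False
        have "(x + d) mod l = x mod l" using h1[OF nx] h2[OF False] by simp
        then show False using modeq_dvd nd by blast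
      qed
    qed
  qed
  moreover have "0 \<in> rr {x, x + d, x + 2 * d} l" using rr_zero[OF l(1)] .
  ultimately show ?thesis by blast
qed

lemma rr3_d:
  fixes x d l :: nat
  assumes l: "prime l" and dv: "l dvd d" and nx: "\<not> l dvd x"
  shows "rr {x, x + d, x + 2 * d} l = {0, x mod l}"
proof
  show "rr {x, x + d, x + 2 * d} l \<subseteq> {0, x mod l}" using rr_shape[of x _ l] nx by blast
  have m1: "(x + d) mod l = x mod l" using dv by (auto elim!: dvdE)
  have m2: "(x + 2 * d) mod l = x mod l" using dv by (auto elim!: dvdE simp: mult.left_commute)
  have "x mod l \<in> rr {x, x + d, x + 2 * d} l"
    unfolding rr_def using m1 m2 l prime_gt_0_nat by auto
  then show "{0, x mod l} \<subseteq> rr {x, x + d, x + 2 * d} l" using rr_zero[OF l] by blast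
qed

lemma rr_G_p: "rr {p, 2 * p} p = {..<p}"
  by (rule rr_full) auto

lemma rr_G_other:
  fixes p l :: nat
  assumes p: "prime p" and l: "prime l" "odd l" "l \<noteq> p"
  shows "rr {p, 2 * p} l = {0}"
proof -
  have np: "\<not> l dvd p" using p l primes_dvd_imp_eq by blast
  have n2p: "\<not> l dvd 2 * p" using np odd_prime_dvd2[OF l(1,2)] by blast
  have "r = 0" if r: "r \<in> rr {p, 2 * p} l" for r
  proof (rule ccontr)
    assume "r \<noteq> 0"
    then have "r = p mod l" "r = (2 * p) mod l" using r np n2p by (auto simp: rr_def)
    then have "l dvd (2 * p - p)" using mod_eq_dvd_iff_nat[of p "2 * p" l] by simp
    then show False using np by simp
  qed
  then show ?thesis using rr_zero[OF l(1)] by blast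
qed

lemma crt2:
  fixes q1 q2 a1 a2 :: nat
  assumes "prime q1" "prime q2" "q1 \<noteq> q2" "a1 < q1" "a2 < q2"
  shows "\<exists>x. x \<ge> 1 \<and> x mod q1 = a1 \<and> x mod q2 = a2"
proof -
  have c: "coprime q2 q1" using assms primes_coprime by blast
  have q20: "q2 \<noteq> 0" "q1 \<noteq> 0" using assms by auto
  obtain s t where st: "q2 * s = q1 * t + 1" using bezout_nat[OF q20(1), of q1] c by auto
  obtain s' t' where st': "q1 * s' = q2 * t' + 1" using bezout_nat[OF q20(2), of q2] c
    by (auto simp: coprime_commute)
  define x where "x = a1 * (q2 * s) + a2 * (q1 * s') + q1 * q2"
  have xx1: "x = a1 + q1 * (a1 * t + a2 * s' + q2)" unfolding x_def using st by (simp add: algebra_simps)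
  have m1: "x mod q1 = a1" unfolding xx1 by (rule mod_lem[OF assms(4)])
  have xx2: "x = a2 + q2 * (a1 * s + a2 * t' + q1)" unfolding x_def using st' by (simp add: algebra_simps)
  have m2: "x mod q2 = a2" unfolding xx2 by (rule mod_lem[OF assms(5)])
  have "x \<ge> 1" unfolding x_def using q20 by (simp add: Suc_le_eq)
  then show ?thesis using m1 m2 by blast
qed

definition HH :: "(nat \<Rightarrow> nat) \<Rightarrow> nat set set \<Rightarrow> nat set set" where
  "HH h F = (\<lambda>A. h ` A) ` F"

definition Phi :: "nat set set set" where
  "Phi = {kirch_F E | E. valid E}"

definition Up :: "nat set set \<Rightarrow> nat set set set" where
  "Up F = {Y \<in> Phi. F \<subseteq> Y}"

lemma kF_Pow: "kirch_F E \<subseteq> Pow Npos"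
  unfolding kirch_F_def by auto

lemma Phi_Pow: "Y \<in> Phi \<Longrightarrow> Y \<subseteq> Pow Npos"
  unfolding Phi_def using kF_Pow by auto

lemma hm_facts:
  assumes "homeomorphic_maps kirch_topology kirch_topology h g"
  shows "homeomorphic_map kirch_topology kirch_topology h"
    "\<And>x. x \<in> Npos \<Longrightarrow> g (h x) = x" "\<And>x. x \<in> Npos \<Longrightarrow> h x \<in> Npos"
  using assms unfolding homeomorphic_maps_map topspace_kirch[symmetric]
  by (auto dest: homeomorphic_imp_surjective_map)

lemma HH_inv:
  assumes "homeomorphic_maps kirch_topology kirch_topology h g" "F \<subseteq> Pow Npos"
  shows "HH g (HH h F) = F"
proof -
  have "g ` h ` A = A" if "A \<subseteq> Npos" for A
    using hm_facts(2)[OF assms(1)] that by (force simp: image_image)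
  then have "HH g (HH h F) = (\<lambda>A. A) ` F" unfolding HH_def image_image
    using assms(2) by (intro image_cong) auto
  then show ?thesis by simp
qed

lemma HH_kF_sub:
  assumes hg: "homeomorphic_maps kirch_topology kirch_topology h g" and E: "valid E"
  shows "HH h (kirch_F E) \<subseteq> kirch_F (h ` E)"
proof
  have hom: "homeomorphic_map kirch_topology kirch_topology h" using hm_facts(1)[OF hg] .
  have gh: "\<And>x. x \<in> Npos \<Longrightarrow> g (h x) = x" using hm_facts(2)[OF hg] .
  have hN: "\<And>x. x \<in> Npos \<Longrightarrow> h x \<in> Npos" using hm_facts(3)[OF hg] .
  have EN: "E \<subseteq> Npos" and ne: "E \<noteq> {}" using E by (auto simp: valid_def)
  fix B' assume "B' \<in> HH h (kirch_F E)"
  then obtain B where B': "B' = h ` B" and "B \<in> kirch_F E" unfolding HH_def by blast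
  then obtain U where BN: "B \<subseteq> Npos" and U: "\<forall>x\<in>E. U x \<in> kirch_nbhds x"
    and UB: "(\<Inter>x\<in>E. kirch_topology closure_of (U x)) \<subseteq> B"
    unfolding kirch_F_def by blast
  have UN: "U x \<subseteq> Npos" if "x \<in> E" for x
    using U that openin_subset topspace_kirch unfolding kirch_nbhds_def by fastforce
  define U' where "U' y = h ` U (g y)" for y
  have U'h: "U' (h x) = h ` U x" if "x \<in> E" for x using gh EN that U'_def by auto
  have U': "\<forall>y\<in>h ` E. U' y \<in> kirch_nbhds y"
  proof
    fix y assume "y \<in> h ` E"
    then obtain x where x: "x \<in> E" "y = h x" by blast
    have "openin kirch_topology (h ` U x)"
      using homeomorphic_map_openness[OF hom] UN[OF x(1)] U x(1) topspace_kirch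
      unfolding kirch_nbhds_def by auto
    moreover have "h x \<in> h ` U x" using U x(1) unfolding kirch_nbhds_def by auto
    ultimately show "U' y \<in> kirch_nbhds y" using U'h x unfolding kirch_nbhds_def by auto
  qed
  have "(\<Inter>y\<in>h ` E. kirch_topology closure_of (U' y)) \<subseteq> h ` B"
  proof
    fix z assume z: "z \<in> (\<Inter>y\<in>h ` E. kirch_topology closure_of (U' y))"
    have cl: "kirch_topology closure_of (U' (h x)) = h ` (kirch_topology closure_of (U x))"
      if "x \<in> E" for x
      using homeomorphic_map_closure_of[OF hom, of "U x"] UN[OF that] U'h[OF that] topspace_kirch by simp
    obtain x0 where x0: "x0 \<in> E" using ne by blast
    then obtain w where w: "w \<in> kirch_topology closure_of (U x0)" "z = h w" using z cl by blast
    have wN: "w \<in> Npos" using subsetD[OF closure_of_subset_topspace w(1)] topspace_kirch by simp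
    have "w \<in> kirch_topology closure_of (U x)" if x: "x \<in> E" for x
    proof -
      obtain w' where w': "w' \<in> kirch_topology closure_of (U x)" "z = h w'" using z cl x by blast
      have "w' \<in> Npos" using subsetD[OF closure_of_subset_topspace w'(1)] topspace_kirch by simp
      then have "w' = w" using gh wN w(2) w'(2) by metis
      then show ?thesis using w' by simp
    qed
    then have "w \<in> B" using UB by blast
    then show "z \<in> h ` B" using w(2) by blast
  qed
  moreover have "h ` B \<subseteq> Npos" using BN hN by blast
  ultimately show "B' \<in> kirch_F (h ` E)" unfolding kirch_F_def B' using U' by blast
qed

lemma valid_image:
  assumes "homeomorphic_maps kirch_topology kirch_topology h g" "valid E"
  shows "valid (h ` E)"
  using assms hm_facts(3)[OF assms(1)] unfolding valid_def by auto

lemma HH_kF: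
  assumes hg: "homeomorphic_maps kirch_topology kirch_topology h g" and E: "valid E"
  shows "HH h (kirch_F E) = kirch_F (h ` E)"
proof
  show "HH h (kirch_F E) \<subseteq> kirch_F (h ` E)" using HH_kF_sub[OF hg E] .
  have gh: "homeomorphic_maps kirch_topology kirch_topology g h" using hg homeomorphic_maps_sym by blast
  have vE: "valid (h ` E)" using valid_image[OF hg E] .
  have "g ` h ` E = E" using hm_facts(2)[OF hg] E unfolding valid_def by (force simp: image_image)
  then have 1: "HH g (kirch_F (h ` E)) \<subseteq> kirch_F E" using HH_kF_sub[OF gh vE] by simp
  have "kirch_F (h ` E) = HH h (HH g (kirch_F (h ` E)))" using HH_inv[OF gh kF_Pow] by simp
  also have "\<dots> \<subseteq> HH h (kirch_F E)" using 1 unfolding HH_def by blast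
  finally show "kirch_F (h ` E) \<subseteq> HH h (kirch_F E)" .
qed

lemma HH_Phi:
  assumes "homeomorphic_maps kirch_topology kirch_topology h g" "Y \<in> Phi"
  shows "HH h Y \<in> Phi"
  using assms HH_kF valid_image unfolding Phi_def by blast

lemma HH_mono: "F \<subseteq> F' \<Longrightarrow> HH h F \<subseteq> HH h F'"
  unfolding HH_def by blast

lemma Up_HH:
  assumes hg: "homeomorphic_maps kirch_topology kirch_topology h g" and F: "F \<in> Phi"
  shows "Up (HH h F) = HH h ` Up F"
proof
  have gh: "homeomorphic_maps kirch_topology kirch_topology g h" using hg homeomorphic_maps_sym by blast
  show "HH h ` Up F \<subseteq> Up (HH h F)"
    unfolding Up_def using HH_Phi[OF hg] HH_mono by blast
  show "Up (HH h F) \<subseteq> HH h ` Up F"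
  proof
    fix Y assume "Y \<in> Up (HH h F)"
    then have Y: "Y \<in> Phi" "HH h F \<subseteq> Y" unfolding Up_def by auto
    have "Y = HH h (HH g Y)" using HH_inv[OF gh Phi_Pow[OF Y(1)]] by simp
    moreover have "HH g Y \<in> Up F"
      unfolding Up_def using HH_Phi[OF gh Y(1)] HH_mono[OF Y(2), of g] HH_inv[OF hg Phi_Pow[OF F]] by simp
    ultimately show "Y \<in> HH h ` Up F" by blast
  qed
qed

lemma card_Up_HH:
  assumes hg: "homeomorphic_maps kirch_topology kirch_topology h g" and F: "F \<in> Phi"
  shows "card (Up (HH h F)) = card (Up F)"
proof -
  have "inj_on (HH h) (Up F)"
  proof (rule inj_on_inverseI)
    fix Y assume "Y \<in> Up F"
    then show "HH g (HH h Y) = Y" using HH_inv[OF hg] Phi_Pow unfolding Up_def by blast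
  qed
  then show ?thesis using Up_HH[OF assms] card_image by metis
qed

definition E3 :: "nat \<Rightarrow> nat \<Rightarrow> nat set" where
  "E3 x d = {x, x + d, x + 2 * d}"

definition Z0 :: "nat set set" where "Z0 = kirch_F (E3 1 1)"
definition AA :: "nat \<Rightarrow> nat \<Rightarrow> nat set set" where "AA q a = kirch_F (E3 a q)"
definition GG :: "nat \<Rightarrow> nat set set" where "GG q = kirch_F {q, 2 * q}"

lemma vE3: "x \<ge> 1 \<Longrightarrow> valid (E3 x d)"
  unfolding E3_def by (rule valid3)

lemma rrZ: "prime l \<Longrightarrow> odd l \<Longrightarrow> rr (E3 1 1) l = {0}"
  unfolding E3_def by (rule rr3_nd) (auto simp: prime_gt_1_nat)

lemma rrA_q: "prime q \<Longrightarrow> 0 < a \<Longrightarrow> a < q \<Longrightarrow> rr (E3 a q) q = {0, a}"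
  unfolding E3_def using rr3_d[of q q a] by (simp add: nat_dvd_not_less)

lemma rrA_l: "prime l \<Longrightarrow> odd l \<Longrightarrow> prime q \<Longrightarrow> l \<noteq> q \<Longrightarrow> rr (E3 a q) l = {0}"
  unfolding E3_def using primes_dvd_imp_eq by (intro rr3_nd) auto

lemma kF_eq_rr:
  assumes "valid E" "valid E'" "kirch_F E = kirch_F E'" "prime q"
  shows "rr E q = rr E' q"
  using kF_le[of E E' q] kF_le[of E' E q] assms by auto

lemma Phi_kF: "valid E \<Longrightarrow> kirch_F E \<in> Phi"
  unfolding Phi_def by blast

lemma Z0_Phi: "Z0 \<in> Phi" unfolding Z0_def by (intro Phi_kF vE3) simp

lemma Z0_top: "Y \<in> Phi \<Longrightarrow> Y \<subseteq> Z0"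
proof -
  assume "Y \<in> Phi"
  then obtain E where E: "valid E" "Y = kirch_F E" unfolding Phi_def by blast
  have "kirch_F E \<subseteq> kirch_F (E3 1 1)"
  proof (rule kF_leI[OF E(1) vE3[OF order_refl]])
    fix q :: nat assume q: "prime q" "odd q"
    show "rr (E3 1 1) q \<subseteq> rr E q" using rrZ[OF q] rr_zero[OF q(1), of E] by simp
  qed
  then show "Y \<subseteq> Z0" using E Z0_def by simp
qed

lemma Up_elem:
  assumes "Y \<in> Up (kirch_F E)" "valid E"
  obtains EY where "valid EY" "Y = kirch_F EY" "\<And>l. prime l \<Longrightarrow> rr EY l \<subseteq> rr E l"
  using assms kF_le unfolding Up_def Phi_def by blast

lemma Up_Z0: "Up Z0 = {Z0}"
  unfolding Up_def using Z0_top Z0_Phi by blast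

lemma card_Up_Z0: "card (Up Z0) = 1" by (simp add: Up_Z0)

lemma Z0_eqI:
  assumes E: "valid E" and h: "\<And>l. prime l \<Longrightarrow> odd l \<Longrightarrow> rr E l = {0}"
  shows "kirch_F E = Z0"
  unfolding Z0_def
proof (rule kF_eqI[OF E vE3[OF order_refl]])
  fix l :: nat assume l: "prime l" "odd l"
  show "rr (E3 1 1) l = rr E l" using rrZ[OF l] h[OF l] by simp
qed

lemma A_eqI:
  assumes E: "valid E" and q: "prime q" and a: "0 < a" "a < q" and hq: "rr E q = {0, a}"
    and h: "\<And>l. prime l \<Longrightarrow> odd l \<Longrightarrow> l \<noteq> q \<Longrightarrow> rr E l = {0}"
  shows "kirch_F E = AA q a"
  unfolding AA_def
proof (rule kF_eqI[OF E vE3])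
  show "1 \<le> a" using a by simp
  fix l :: nat assume l: "prime l" "odd l"
  show "rr (E3 a q) l = rr E l"
  proof (cases "l = q")
    case True then show ?thesis using rrA_q[OF q a] hq by simp
  next
    case False then show ?thesis using rrA_l[OF l q False] h[OF l False] by simp
  qed
qed

lemma G_eqI:
  assumes E: "valid E" and q: "prime q" and hq: "rr E q = {..<q}"
    and h: "\<And>l. prime l \<Longrightarrow> odd l \<Longrightarrow> l \<noteq> q \<Longrightarrow> rr E l = {0}"
  shows "kirch_F E = GG q"
  unfolding GG_def
proof (rule kF_eqI[OF E valid2])
  show "1 \<le> q" using prime_ge_1_nat[OF q] .
  fix l :: nat assume l: "prime l" "odd l"
  show "rr {q, 2 * q} l = rr E l"
  proof (cases "l = q")
    case True then show ?thesis using rr_G_p hq by simp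
  next
    case False then show ?thesis using rr_G_other[OF q l False] h[OF l False] by simp
  qed
qed

lemma Z0_eqI1:
  assumes E: "valid E" and hq: "rr E q = {0}"
    and h: "\<And>l. prime l \<Longrightarrow> odd l \<Longrightarrow> l \<noteq> q \<Longrightarrow> rr E l = {0}"
  shows "kirch_F E = Z0"
proof (rule Z0_eqI[OF E])
  fix l :: nat assume l: "prime l" "odd l"
  show "rr E l = {0}"
  proof (cases "l = q")
    case True then show ?thesis using hq by simp
  next
    case False show ?thesis using h[OF l False] .
  qed
qed

lemma Z0_eqI2:
  assumes E: "valid E" and h1: "rr E q1 = {0}" and h2: "rr E q2 = {0}"
    and h: "\<And>l. prime l \<Longrightarrow> odd l \<Longrightarrow> l \<noteq> q1 \<Longrightarrow> l \<noteq> q2 \<Longrightarrow> rr E l = {0}"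
  shows "kirch_F E = Z0"
proof (rule Z0_eqI1[OF E h1])
  fix l :: nat assume l: "prime l" "odd l" "l \<noteq> q1"
  show "rr E l = {0}"
  proof (cases "l = q2")
    case True then show ?thesis using h2 by simp
  next
    case False show ?thesis using h[OF l False] .
  qed
qed

lemma A_eqI2:
  assumes E: "valid E" and q: "prime q" and a: "0 < a" "a < q" and hq: "rr E q = {0, a}"
    and h2: "rr E q' = {0}"
    and h: "\<And>l. prime l \<Longrightarrow> odd l \<Longrightarrow> l \<noteq> q \<Longrightarrow> l \<noteq> q' \<Longrightarrow> rr E l = {0}"
  shows "kirch_F E = AA q a"
proof (rule A_eqI[OF E q a hq])
  fix l :: nat assume l: "prime l" "odd l" "l \<noteq> q"
  show "rr E l = {0}"
  proof (cases "l = q'")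
    case True then show ?thesis using h2 by simp
  next
    case False show ?thesis using h[OF l False] .
  qed
qed

lemma odd_prime_ge3: "prime (p::nat) \<Longrightarrow> odd p \<Longrightarrow> p \<ge> 3"
  using prime_ge_2_nat[of p] by (cases "p = 2") auto

lemma vA: "0 < a \<Longrightarrow> valid (E3 a q)" by (rule vE3) simp
lemma vG: "prime q \<Longrightarrow> valid {q, 2 * q}" by (rule valid2[OF prime_ge_1_nat])
lemma vZ: "valid (E3 1 1)" by (rule vE3) simp

lemma Up_A:
  assumes q: "prime q" "odd q" and a: "0 < a" "a < q"
  shows "Up (AA q a) \<subseteq> {Z0, AA q a}"
proof
  fix Y assume "Y \<in> Up (AA q a)"
  then have Yin: "Y \<in> Up (kirch_F (E3 a q))" unfolding AA_def .
  obtain EY where EY: "valid EY" "Y = kirch_F EY" "\<And>l. prime l \<Longrightarrow> rr EY l \<subseteq> rr (E3 a q) l"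
    by (rule Up_elem[OF Yin vA[OF a(1)]]) blast
  have oth: "rr EY l = {0}" if "prime l" "odd l" "l \<noteq> q" for l
    using EY(3)[of l] rrA_l[of l q a] that q rr_zero[of l EY] by auto
  have atq: "rr EY q \<subseteq> {0, a}" using EY(3)[OF q(1)] rrA_q[OF q(1) a] by simp
  show "Y \<in> {Z0, AA q a}"
  proof (cases "a \<in> rr EY q")
    case True
    then have "rr EY q = {0, a}" using atq rr_zero[OF q(1)] by blast
    then have "kirch_F EY = AA q a" by (rule A_eqI[OF EY(1) q(1) a _ oth])
    then have "Y = AA q a" using EY(2) by simp
    then show ?thesis by simp
  next
    case False
    then have "rr EY q = {0}" using atq rr_zero[OF q(1)] by blast
    then have "kirch_F EY = Z0" by (rule Z0_eqI1[OF EY(1) _ oth])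
    then have "Y = Z0" using EY(2) by simp
    then show ?thesis by simp
  qed
qed

lemma card_Up_A:
  assumes "prime q" "odd q" "0 < a" "a < q"
  shows "card (Up (AA q a)) \<le> 2"
proof -
  have "card (Up (AA q a)) \<le> card {Z0, AA q a}" using Up_A[OF assms] by (intro card_mono) auto
  also have "\<dots> \<le> 2" by (simp add: card_insert_if)
  finally show ?thesis .
qed

lemma rr_Z0_A_G:
  assumes q: "prime q" "odd q"
  shows "rr (E3 1 1) q = {0}" "0 < a \<Longrightarrow> a < q \<Longrightarrow> rr (E3 a q) q = {0, a}" "rr {q, 2 * q} q = {..<q}"
  using rrZ[OF q] rrA_q[OF q(1)] rr_G_p by auto


lemma Up_G:
  assumes q: "prime q" "odd q"
  shows "Up (GG q) = insert Z0 (insert (GG q) (AA q ` {1..<q}))"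
proof
  show "Up (GG q) \<subseteq> insert Z0 (insert (GG q) (AA q ` {1..<q}))"
  proof
    fix Y assume "Y \<in> Up (GG q)"
    then have Yin: "Y \<in> Up (kirch_F {q, 2 * q})" unfolding GG_def .
    obtain EY where EY: "valid EY" "Y = kirch_F EY" "\<And>l. prime l \<Longrightarrow> rr EY l \<subseteq> rr {q, 2 * q} l"
      by (rule Up_elem[OF Yin vG[OF q(1)]]) blast
    have oth: "rr EY l = {0}" if "prime l" "odd l" "l \<noteq> q" for l
      using EY(3)[of l] rr_G_other[of q l] that q rr_zero[of l EY] by auto
    show "Y \<in> insert Z0 (insert (GG q) (AA q ` {1..<q}))"
    proof (cases "\<forall>x\<in>EY. q dvd x")
      case True
      then have "rr EY q = {..<q}" by (intro rr_full) auto
      then have "kirch_F EY = GG q" by (rule G_eqI[OF EY(1) q(1) _ oth])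
      then have "Y = GG q" using EY(2) by simp
      then show ?thesis by simp
    next
      case False
      then obtain x where x: "x \<in> EY" "\<not> q dvd x" by blast
      have sh: "rr EY q \<subseteq> {0, x mod q}" using rr_shape[OF x] .
      have "x mod q \<noteq> 0" using x(2) by (simp add: dvd_eq_mod_eq_0)
      moreover have "q > 0" using prime_gt_0_nat[OF q(1)] .
      ultimately have a: "0 < x mod q" "x mod q < q" by simp_all
      show ?thesis
      proof (cases "x mod q \<in> rr EY q")
        case True
        then have "rr EY q = {0, x mod q}" using sh rr_zero[OF q(1)] by blast
        then have "kirch_F EY = AA q (x mod q)" by (rule A_eqI[OF EY(1) q(1) a _ oth])
        then have "Y = AA q (x mod q)" using EY(2) by simp
        then show ?thesis using a by auto
      next
        case False
        then have "rr EY q = {0}" using sh rr_zero[OF q(1)] by blast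
        then have "kirch_F EY = Z0" by (rule Z0_eqI1[OF EY(1) _ oth])
        then have "Y = Z0" using EY(2) by simp
        then show ?thesis by simp
      qed
    qed
  qed
  show "insert Z0 (insert (GG q) (AA q ` {1..<q})) \<subseteq> Up (GG q)"
  proof -
    have "Z0 \<in> Up (GG q)" unfolding Up_def using Z0_Phi Z0_top Phi_kF[OF vG[OF q(1)]] GG_def by auto
    moreover have "GG q \<in> Up (GG q)" unfolding Up_def GG_def using Phi_kF[OF vG[OF q(1)]] by auto
    moreover have "AA q a \<in> Up (GG q)" if a: "a \<in> {1..<q}" for a
    proof -
      have a': "0 < a" "a < q" using a by auto
      have "kirch_F {q, 2 * q} \<subseteq> kirch_F (E3 a q)"
      proof (rule kF_leI[OF vG[OF q(1)] vA[OF a'(1)]])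
        fix l :: nat assume l: "prime l" "odd l"
        show "rr (E3 a q) l \<subseteq> rr {q, 2 * q} l"
        proof (cases "l = q")
          case True then show ?thesis using rrA_q[OF q(1) a'] rr_G_p rr_zero[OF q(1)] a' by auto
        next
          case False then show ?thesis using rrA_l[OF l q(1) False] rr_zero[OF l(1)] by auto
        qed
      qed
      then show ?thesis unfolding Up_def AA_def GG_def using Phi_kF[OF vA[OF a'(1)]] by auto
    qed
    ultimately show ?thesis by blast
  qed
qed

lemma card_Up_G:
  assumes q: "prime q" "odd q"
  shows "card (Up (GG q)) = q + 1"
proof -
  have q3: "q \<ge> 3" using odd_prime_ge3[OF q] .
  have rZ: "rr (E3 1 1) q = {0}" and rG: "rr {q, 2 * q} q = {..<q}" using rr_Z0_A_G[OF q] by auto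
  have rA: "rr (E3 a q) q = {0, a}" if "a \<in> {1..<q}" for a using rr_Z0_A_G(2)[OF q, of a] that by auto
  have neq: "kirch_F E \<noteq> kirch_F E'" if "valid E" "valid E'" "rr E q \<noteq> rr E' q" for E E'
    using kF_eq_rr[OF that(1,2) _ q(1)] that(3) by blast
  have "1 \<in> rr {q, 2 * q} q" using rG q3 by simp
  moreover have "1 \<notin> rr (E3 1 1) q" using rZ by simp
  ultimately have "rr (E3 1 1) q \<noteq> rr {q, 2 * q} q" by blast
  then have "Z0 \<noteq> GG q" unfolding Z0_def GG_def using neq[OF vZ vG[OF q(1)]] by blast
  moreover have "Z0 \<notin> AA q ` {1..<q}"
  proof
    assume "Z0 \<in> AA q ` {1..<q}"
    then obtain a where a: "a \<in> {1..<q}" "Z0 = AA q a" by blast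
    have a0: "0 < a" using a(1) by simp
    have "kirch_F (E3 1 1) = kirch_F (E3 a q)" using a(2) unfolding Z0_def AA_def .
    then have "rr (E3 1 1) q = rr (E3 a q) q" using kF_eq_rr[OF vZ vA[OF a0] _ q(1)] by blast
    then show False using rZ rA[OF a(1)] a(1) by auto
  qed
  moreover have "GG q \<notin> AA q ` {1..<q}"
  proof
    assume "GG q \<in> AA q ` {1..<q}"
    then obtain a where a: "a \<in> {1..<q}" "GG q = AA q a" by blast
    have a0: "0 < a" using a(1) by simp
    have "kirch_F {q, 2 * q} = kirch_F (E3 a q)" using a(2) unfolding GG_def AA_def .
    then have "rr {q, 2 * q} q = rr (E3 a q) q" using kF_eq_rr[OF vG[OF q(1)] vA[OF a0] _ q(1)] by blast
    then have e: "{..<q} = {0, a}" using rG rA[OF a(1)] by simp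
    have "1 \<in> {..<q}" "2 \<in> {..<q}" using q3 by auto
    then show False using e a(1) by auto
  qed
  moreover have "inj_on (AA q) {1..<q}"
  proof
    fix a b assume ab: "a \<in> {1..<q}" "b \<in> {1..<q}" "AA q a = AA q b"
    have a0: "0 < a" "0 < b" using ab by auto
    have "kirch_F (E3 a q) = kirch_F (E3 b q)" using ab(3) unfolding AA_def .
    then have "rr (E3 a q) q = rr (E3 b q) q" using kF_eq_rr[OF vA[OF a0(1)] vA[OF a0(2)] _ q(1)] by blast
    then have "{0, a} = {0, b}" using rA ab(1,2) by simp
    then show "a = b" using ab by (auto simp: doubleton_eq_iff)
  qed
  ultimately have "card (insert Z0 (insert (GG q) (AA q ` {1..<q}))) = q + 1"
    using q3 by (simp add: card_image)
  then show ?thesis using Up_G[OF q] by simp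
qed

lemma classify:
  assumes hg: "homeomorphic_maps kirch_topology kirch_topology h g"
    and p: "prime p" "odd p"
  shows "HH h (GG p) = GG p \<or>
    (p = 3 \<and> (\<exists>r a. prime r \<and> odd r \<and> r \<noteq> 3 \<and> 0 < a \<and> a < r \<and> HH h (GG p) \<subseteq> AA r a))"
proof -
  have p3: "p \<ge> 3" using odd_prime_ge3[OF p] .
  define E' where "E' = h ` {p, 2 * p}"
  have vE': "valid E'" unfolding E'_def using valid_image[OF hg vG[OF p(1)]] .
  define X where "X = HH h (GG p)"
  have XE: "X = kirch_F E'" unfolding X_def E'_def GG_def using HH_kF[OF hg vG[OF p(1)]] .
  have GPhi: "GG p \<in> Phi" unfolding GG_def using Phi_kF[OF vG[OF p(1)]] .
  have XPhi: "X \<in> Phi" using XE Phi_kF[OF vE'] by simp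
  have cX: "card (Up X) = p + 1" unfolding X_def using card_Up_HH[OF hg GPhi] card_Up_G[OF p] by simp
  have c2: "card (Up Y) \<le> 2" if Y: "Y \<in> Up X" "Y \<noteq> X" for Y
  proof -
    obtain Y0 where Y0: "Y0 \<in> Up (GG p)" "Y = HH h Y0" using Y(1) Up_HH[OF hg GPhi] X_def by auto
    have Y0Phi: "Y0 \<in> Phi" using Y0(1) unfolding Up_def by auto
    have "Y0 \<noteq> GG p" using Y0(2) Y(2) X_def by blast
    then have "Y0 = Z0 \<or> (\<exists>a\<in>{1..<p}. Y0 = AA p a)" using Y0(1) Up_G[OF p] by auto
    then have "card (Up Y0) \<le> 2"
    proof
      assume "Y0 = Z0" then show ?thesis using card_Up_Z0 by simp
    next
      assume "\<exists>a\<in>{1..<p}. Y0 = AA p a"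
      then obtain a where "a \<in> {1..<p}" "Y0 = AA p a" by blast
      then show ?thesis using card_Up_A[OF p] by auto
    qed
    then show ?thesis using card_Up_HH[OF hg Y0Phi] Y0(2) by simp
  qed
  show ?thesis
  proof (cases "\<exists>q1 q2 a1 a2. prime q1 \<and> odd q1 \<and> prime q2 \<and> odd q2 \<and> q1 \<noteq> q2 \<and>
      a1 \<in> rr E' q1 \<and> a1 \<noteq> 0 \<and> a2 \<in> rr E' q2 \<and> a2 \<noteq> 0")
    case True
    then obtain q1 q2 a1 a2 where qa: "prime q1" "odd q1" "prime q2" "odd q2" "q1 \<noteq> q2"
      "a1 \<in> rr E' q1" "a1 \<noteq> 0" "a2 \<in> rr E' q2" "a2 \<noteq> 0" by blast
    have lt: "a1 < q1" "a2 < q2" using qa rr_lt by auto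
    obtain x where x: "x \<ge> 1" "x mod q1 = a1" "x mod q2 = a2" using crt2[OF qa(1,3,5) lt] by blast
    define d where "d = q1 * q2"
    define EY where "EY = E3 x d"
    have vEY: "valid EY" unfolding EY_def using vE3[OF x(1)] .
    have nx1: "\<not> q1 dvd x"
    proof
      assume "q1 dvd x" then have "x mod q1 = 0" by (simp add: dvd_eq_mod_eq_0)
      then show False using x(2) qa(7) by simp
    qed
    have nx2: "\<not> q2 dvd x"
    proof
      assume "q2 dvd x" then have "x mod q2 = 0" by (simp add: dvd_eq_mod_eq_0)
      then show False using x(3) qa(9) by simp
    qed
    have r1: "rr EY q1 = {0, a1}" unfolding EY_def E3_def d_def using rr3_d[OF qa(1) _ nx1, of "q1 * q2"] x(2) by simp
    have r2: "rr EY q2 = {0, a2}" unfolding EY_def E3_def d_def using rr3_d[OF qa(3) _ nx2, of "q1 * q2"] x(3) by simp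
    have ro: "rr EY l = {0}" if l: "prime l" "odd l" "l \<noteq> q1" "l \<noteq> q2" for l
    proof -
      have "\<not> l dvd d"
      proof
        assume "l dvd d"
        then have "l dvd q1 \<or> l dvd q2" unfolding d_def using prime_dvd_mult_iff[OF l(1)] by blast
        then have "l = q1 \<or> l = q2" using primes_dvd_imp_eq[OF l(1) qa(1)] primes_dvd_imp_eq[OF l(1) qa(3)] by blast
        then show False using l(3,4) by blast
      qed
      then show ?thesis unfolding EY_def E3_def using rr3_nd[OF l(1,2)] by simp
    qed
    define Y where "Y = kirch_F EY"
    have "X \<subseteq> Y" unfolding XE Y_def
    proof (rule kF_leI[OF vE' vEY])
      fix l :: nat assume l: "prime l" "odd l"
      show "rr EY l \<subseteq> rr E' l"
        using r1 r2 ro[OF l] qa(6,8) rr_zero[OF l(1)] by (cases "l = q1"; cases "l = q2") auto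
    qed
    then have YUp: "Y \<in> Up X" unfolding Up_def Y_def using Phi_kF[OF vEY] by simp
    have a0: "0 < a1" "0 < a2" using qa by auto
    have UpY: "Up Y \<subseteq> {Z0, AA q1 a1, AA q2 a2, Y}"
    proof
      fix W assume "W \<in> Up Y"
      then have Win: "W \<in> Up (kirch_F EY)" unfolding Y_def .
      obtain EW where EW: "valid EW" "W = kirch_F EW" "\<And>l. prime l \<Longrightarrow> rr EW l \<subseteq> rr EY l"
        by (rule Up_elem[OF Win vEY]) blast
      have wo: "rr EW l = {0}" if "prime l" "odd l" "l \<noteq> q1" "l \<noteq> q2" for l
        using EW(3)[of l] ro[OF that] rr_zero[of l EW] that by auto
      have w1: "rr EW q1 = {0} \<or> rr EW q1 = {0, a1}" using EW(3)[OF qa(1)] r1 rr_zero[OF qa(1), of EW] by auto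
      have w2: "rr EW q2 = {0} \<or> rr EW q2 = {0, a2}" using EW(3)[OF qa(3)] r2 rr_zero[OF qa(3), of EW] by auto
      show "W \<in> {Z0, AA q1 a1, AA q2 a2, Y}"
      proof (cases "rr EW q1 = {0}")
        case c1: True
        show ?thesis
        proof (cases "rr EW q2 = {0}")
          case True
          have "kirch_F EW = Z0" by (rule Z0_eqI2[OF EW(1) c1 True wo])
          then have "W = Z0" using EW(2) by simp
          then show ?thesis by simp
        next
          case False
          then have "rr EW q2 = {0, a2}" using w2 by simp
          moreover have wo': "rr EW l = {0}" if "prime l" "odd l" "l \<noteq> q2" "l \<noteq> q1" for l
            using wo[OF that(1,2,4,3)] .
          ultimately have "kirch_F EW = AA q2 a2" by (rule A_eqI2[OF EW(1) qa(3) a0(2) lt(2) _ c1])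
          then have "W = AA q2 a2" using EW(2) by simp
          then show ?thesis by simp
        qed
      next
        case c1: False
        then have c1': "rr EW q1 = {0, a1}" using w1 by simp
        show ?thesis
        proof (cases "rr EW q2 = {0}")
          case True
          have "kirch_F EW = AA q1 a1" by (rule A_eqI2[OF EW(1) qa(1) a0(1) lt(1) c1' True wo])
          then have "W = AA q1 a1" using EW(2) by simp
          then show ?thesis by simp
        next
          case False
          then have "rr EW q2 = {0, a2}" using w2 by simp
          note c2' = this
          have "kirch_F EY = kirch_F EW"
          proof (rule kF_eqI[OF vEY EW(1)])
            fix l :: nat assume l: "prime l" "odd l"
            show "rr EW l = rr EY l"
            proof (cases "l = q1")
              case True then show ?thesis using c1' r1 by simp
            next
              case n1: False
              show ?thesis
              proof (cases "l = q2")
                case True then show ?thesis using c2' r2 by simp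
              next
                case False then show ?thesis using wo[OF l n1 False] ro[OF l n1 False] by simp
              qed
            qed
          qed
          then show ?thesis using EW(2) Y_def by simp
        qed
      qed
    qed
    have finUpY: "finite (Up Y)" using UpY finite_subset by blast
    have A1: "AA q1 a1 \<in> Up Y"
    proof -
      have "kirch_F EY \<subseteq> kirch_F (E3 a1 q1)"
      proof (rule kF_leI[OF vEY vA[OF a0(1)]])
        fix l :: nat assume l: "prime l" "odd l"
        show "rr (E3 a1 q1) l \<subseteq> rr EY l"
        proof (cases "l = q1")
          case True then show ?thesis using rrA_q[OF qa(1) a0(1) lt(1)] r1 by simp
        next
          case False then show ?thesis using rrA_l[OF l qa(1) False] rr_zero[OF l(1)] by auto
        qed
      qed
      then show ?thesis unfolding Up_def AA_def Y_def using Phi_kF[OF vA[OF a0(1)]] by auto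
    qed
    have A2: "AA q2 a2 \<in> Up Y"
    proof -
      have "kirch_F EY \<subseteq> kirch_F (E3 a2 q2)"
      proof (rule kF_leI[OF vEY vA[OF a0(2)]])
        fix l :: nat assume l: "prime l" "odd l"
        show "rr (E3 a2 q2) l \<subseteq> rr EY l"
        proof (cases "l = q2")
          case True then show ?thesis using rrA_q[OF qa(3) a0(2) lt(2)] r2 by simp
        next
          case False then show ?thesis using rrA_l[OF l qa(3) False] rr_zero[OF l(1)] by auto
        qed
      qed
      then show ?thesis unfolding Up_def AA_def Y_def using Phi_kF[OF vA[OF a0(2)]] by auto
    qed
    have YY: "Y \<in> Up Y" unfolding Up_def Y_def using Phi_kF[OF vEY] by simp
    have ZY: "Z0 \<in> Up Y" unfolding Up_def using Z0_Phi Z0_top Phi_kF[OF vEY] Y_def by auto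
    have YZ: "Y \<noteq> Z0"
    proof
      assume "Y = Z0"
      then have "rr EY q1 = rr (E3 1 1) q1" using kF_eq_rr[OF vEY vZ _ qa(1)] Y_def Z0_def by simp
      then show False using r1 rrZ[OF qa(1,2)] a0 by auto
    qed
    have YA: "Y \<noteq> AA q1 a1"
    proof
      assume "Y = AA q1 a1"
      then have "rr EY q2 = rr (E3 a1 q1) q2" using kF_eq_rr[OF vEY vA[OF a0(1)] _ qa(3)] Y_def AA_def by simp
      then show False using r2 rrA_l[OF qa(3,4,1)] qa(5) a0 by auto
    qed
    have ZA: "Z0 \<noteq> AA q1 a1"
    proof
      assume "Z0 = AA q1 a1"
      then have "rr (E3 1 1) q1 = rr (E3 a1 q1) q1" using kF_eq_rr[OF vZ vA[OF a0(1)] _ qa(1)] Z0_def AA_def by simp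
      then show False using rrZ[OF qa(1,2)] rrA_q[OF qa(1) a0(1) lt(1)] a0 by auto
    qed
    have "card {Y, Z0, AA q1 a1} = 3" using YZ YA ZA by simp
    moreover have "card {Y, Z0, AA q1 a1} \<le> card (Up Y)" using YY ZY A1 finUpY by (intro card_mono) auto
    ultimately have "card (Up Y) \<ge> 3" by simp
    note c3 = this
    have YX: "Y = X"
    proof (rule ccontr)
      assume "Y \<noteq> X"
      then have "card (Up Y) \<le> 2" by (rule c2[OF YUp])
      then show False using c3 by simp
    qed
    have "card (Up X) \<le> card {Z0, AA q1 a1, AA q2 a2, Y}" using UpY YX by (intro card_mono) auto
    also have "\<dots> \<le> 4" by (simp add: card_insert_if)
    finally have "p = 3" using cX p3 by simp
    moreover have "\<exists>r a. prime r \<and> odd r \<and> r \<noteq> 3 \<and> 0 < a \<and> a < r \<and> X \<subseteq> AA r a"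
    proof (cases "q1 = 3")
      case True
      then have "q2 \<noteq> 3" using qa(5) by simp
      moreover have "X \<subseteq> AA q2 a2" using A2 YX unfolding Up_def by simp
      ultimately show ?thesis using qa(3,4) a0(2) lt(2) by blast
    next
      case False
      moreover have "X \<subseteq> AA q1 a1" using A1 YX unfolding Up_def by simp
      ultimately show ?thesis using qa(1,2) a0(1) lt(1) by blast
    qed
    ultimately show ?thesis unfolding X_def by blast
  next
    case nc: False
    show ?thesis
    proof (cases "\<forall>l. prime l \<longrightarrow> odd l \<longrightarrow> rr E' l = {0}")
      case True
      have "kirch_F E' = Z0"
      proof (rule Z0_eqI[OF vE'])
        fix l :: nat assume "prime l" "odd l"
        then show "rr E' l = {0}" using True by blast
      qed
      then have "X = Z0" using XE by simp
      then have "card (Up X) = 1" using card_Up_Z0 by simp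
      then show ?thesis using cX p3 by simp
    next
      case False
      then obtain q where q: "prime q" "odd q" "rr E' q \<noteq> {0}" by blast
      then obtain a where a: "a \<in> rr E' q" "a \<noteq> 0" using rr_zero[OF q(1), of E'] by blast
      have oth: "rr E' l = {0}" if l: "prime l" "odd l" "l \<noteq> q" for l
      proof (rule ccontr)
        assume "rr E' l \<noteq> {0}"
        then obtain b where b: "b \<in> rr E' l" "b \<noteq> 0" using rr_zero[OF l(1), of E'] by blast
        have "prime q \<and> odd q \<and> prime l \<and> odd l \<and> q \<noteq> l \<and>
          a \<in> rr E' q \<and> a \<noteq> 0 \<and> b \<in> rr E' l \<and> b \<noteq> 0" using q a l b by auto
        then show False using nc by blast
      qed
      show ?thesis
      proof (cases "\<forall>x\<in>E'. q dvd x")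
        case True
        then have "rr E' q = {..<q}" by (intro rr_full) auto
        then have "kirch_F E' = GG q" by (rule G_eqI[OF vE' q(1) _ oth])
        then have "X = GG q" using XE by simp
        then have "q + 1 = p + 1" using cX card_Up_G[OF q(1,2)] by simp
        then show ?thesis using \<open>X = GG q\<close> X_def by simp
      next
        case False
        then obtain x where x: "x \<in> E'" "\<not> q dvd x" by blast
        have "rr E' q \<subseteq> {0, x mod q}" using rr_shape[OF x] .
        then have ax: "a = x mod q" and rq: "rr E' q = {0, a}" using a rr_zero[OF q(1), of E'] by auto
        have a': "0 < a" "a < q" using a rr_lt by auto
        have "kirch_F E' = AA q a" by (rule A_eqI[OF vE' q(1) a' rq oth])
        then have "X = AA q a" using XE by simp
        then have "card (Up X) \<le> 2" using card_Up_A[OF q(1,2) a'] by simp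
        then show ?thesis using cX p3 by simp
      qed
    qed
  qed
qed

lemma HH_Z0:
  assumes hg: "homeomorphic_maps kirch_topology kirch_topology h g"
  shows "HH h Z0 = Z0"
proof -
  have gh: "homeomorphic_maps kirch_topology kirch_topology g h" using hg homeomorphic_maps_sym by blast
  have 1: "HH h Z0 \<subseteq> Z0" using Z0_top HH_Phi[OF hg Z0_Phi] by blast
  have "HH g Z0 \<subseteq> Z0" using Z0_top HH_Phi[OF gh Z0_Phi] by blast
  then have "HH h (HH g Z0) \<subseteq> HH h Z0" by (rule HH_mono)
  then have "Z0 \<subseteq> HH h Z0" using HH_inv[OF gh Phi_Pow[OF Z0_Phi]] by simp
  then show ?thesis using 1 by blast
qed

lemma main:
  assumes hom: "homeomorphic_map kirch_topology kirch_topology h"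
    and p: "prime p" "odd p"
  shows "HH h (GG p) = GG p"
proof -
  obtain g where hg: "homeomorphic_maps kirch_topology kirch_topology h g"
    using hom homeomorphic_map_maps by blast
  have gh: "homeomorphic_maps kirch_topology kirch_topology g h" using hg homeomorphic_maps_sym by blast
  show ?thesis
  proof (rule ccontr)
    assume ne: "HH h (GG p) \<noteq> GG p"
    then obtain r a where ra: "p = 3" "prime r" "odd r" "r \<noteq> 3" "0 < a" "a < r" "HH h (GG p) \<subseteq> AA r a"
      using classify[OF hg p] by blast
    have Gr: "HH h (GG r) = GG r" using classify[OF hg ra(2,3)] ra(4) by blast
    have GrA: "GG r \<subseteq> AA r a"
      using Up_G[OF ra(2,3)] ra(5,6) unfolding Up_def by auto
    have APhi: "AA r a \<in> Phi" unfolding AA_def using Phi_kF[OF vA[OF ra(5)]] .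
    define W where "W = HH g (AA r a)"
    have WPhi: "W \<in> Phi" unfolding W_def using HH_Phi[OF gh APhi] .
    have GPhi: "\<And>q. prime q \<Longrightarrow> GG q \<in> Phi" unfolding GG_def using Phi_kF vG by blast
    have "GG p = HH g (HH h (GG p))" using HH_inv[OF hg Phi_Pow[OF GPhi[OF p(1)]]] by simp
    also have "\<dots> \<subseteq> W" unfolding W_def using HH_mono[OF ra(7)] .
    finally have W3: "GG 3 \<subseteq> W" using ra(1) by simp
    have "GG r = HH g (HH h (GG r))" using HH_inv[OF hg Phi_Pow[OF GPhi[OF ra(2)]]] by simp
    also have "\<dots> = HH g (GG r)" using Gr by simp
    also have "\<dots> \<subseteq> W" unfolding W_def using HH_mono[OF GrA] .
    finally have Wr: "GG r \<subseteq> W" .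
    obtain EW where EW: "valid EW" "W = kirch_F EW" using WPhi unfolding Phi_def by blast
    have p3: "prime (3::nat)" by simp
    have "rr EW l = {0}" if l: "prime l" "odd l" for l
    proof (cases "l = 3")
      case True
      have "rr EW l \<subseteq> rr {r, 2 * r} l" using kF_le[OF vG[OF ra(2)] EW(1) _ l(1)] Wr EW(2) GG_def by simp
      then show ?thesis using rr_G_other[OF ra(2) l] True ra(4) rr_zero[OF l(1)] by auto
    next
      case False
      have "rr EW l \<subseteq> rr {3, 2 * 3} l" using kF_le[OF vG[OF p3] EW(1) _ l(1)] W3 EW(2) GG_def by simp
      then show ?thesis using rr_G_other[OF p3 l] False rr_zero[OF l(1)] by auto
    qed
    then have "kirch_F EW = Z0" by (rule Z0_eqI[OF EW(1)])
    then have "W = Z0" using EW(2) by simp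
    then have "AA r a = HH h Z0" using HH_inv[OF gh Phi_Pow[OF APhi]] W_def by simp
    then have "AA r a = Z0" using HH_Z0[OF hg] by simp
    then have "rr (E3 a r) r = rr (E3 1 1) r" using kF_eq_rr[OF vA[OF ra(5)] vZ _ ra(2)] AA_def Z0_def by simp
    then show False using rrA_q[OF ra(2,5,6)] rrZ[OF ra(2,3)] ra(5) by auto
  qed
qed

theorem lemma3p13:
  fixes h :: "nat \<Rightarrow> nat" and p :: nat
  assumes "homeomorphic_map kirch_topology kirch_topology h"
    and "prime p" and "odd p"
  shows "(\<lambda>A. h ` A) ` kirch_F {p, 2 * p} = kirch_F {p, 2 * p}"
  using main[OF assms] unfolding HH_def GG_def .

end
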